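(* For all non-negative integers $n,k,m$, $$\det\Big(C_{2n+2i+2j+4m-2}^{(2k+2m-1)}\Big)_{0\le i,j\le k-1}=\det\Big(C_{-2n-2i-2j}^{(2k+2m-1)}\Big)_{0\le i,j\le m-1},$$ where a $0\times0$ determinant equals $1$.
   Context: For $N\ge0$, $C_N^{(K)}$ is the number of lattice paths with steps $(1,1),(1,-1)$ from $(0,0)$ to $(N,0)$ never going below the $x$-axis nor above $y=K$. For odd $K$ the generating function $F(x)=\sum_{N\ge0}C_N^{(K)}x^N$ is a rational function $p/q$ with $\deg p<\deg q$, $q(0)\neq0$; $C_N^{(K)}$ for negative $N$ is defined by extending the associated linear recurrence backwards, equivalently $\sum_{N\ge1}C_{-N}^{(K)}x^N=-F(1/x)$. *)

theory Defs
  imports "HOL-Computational_Algebra.Polynomial" "Jordan_Normal_Form.Determinant"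
begin

definition bounded_paths :: "nat \<Rightarrow> nat \<Rightarrow> int list set" where
  "bounded_paths K N = {s. length s = N \<and> set s \<subseteq> {1, -1} \<and> sum_list s = 0 \<and>
      (\<forall>j\<le>N. 0 \<le> sum_list (take j s) \<and> sum_list (take j s) \<le> int K)}"

definition C_nat :: "nat \<Rightarrow> nat \<Rightarrow> nat" where
  "C_nat K N = card (bounded_paths K N)"

text \<open>Extension to all integer indices: the unique two-sided sequence that agrees
  with C_nat on N \<ge> 0 and satisfies, for all integers N, the linear recurrence given by
  a denominator polynomial q with q(0) \<noteq> 0 (i.e. F = p/q with deg p < deg q),
  extended backwards.\<close>
definition C :: "nat \<Rightarrow> int \<Rightarrow> real" where
  "C K = (THE c :: int \<Rightarrow> real.
      (\<forall>n::nat. c (int n) = real (C_nat K n)) \<and>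
      (\<exists>q :: real poly. poly q 0 \<noteq> 0 \<and>
          (\<forall>N::int. (\<Sum>i\<le>degree q. coeff q i * c (N - int i)) = 0)))"

end

theory Submission
  imports Defs
begin


fun w :: "int \<Rightarrow> nat \<Rightarrow> int \<Rightarrow> int \<Rightarrow> nat" where
  "w K 0 x y = (if 0 \<le> x \<and> x \<le> K \<and> x = y then 1 else 0)"
| "w K (Suc N) x y = (if 0 \<le> x \<and> x \<le> K then w K N (x+1) y + w K N (x-1) y else 0)"

definition bp :: "int \<Rightarrow> nat \<Rightarrow> int \<Rightarrow> int \<Rightarrow> int list set" where
  "bp K N x y = {s. length s = N \<and> set s \<subseteq> {1, -1} \<and> x + sum_list s = y \<and>
      (\<forall>j\<le>N. 0 \<le> x + sum_list (take j s) \<and> x + sum_list (take j s) \<le> K)}"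

lemma bp_finite: "finite (bp K N x y)"
proof -
  have "bp K N x y \<subseteq> {s. set s \<subseteq> {1,-1} \<and> length s = N}" unfolding bp_def by auto
  moreover have "finite {s. set s \<subseteq> {1::int,-1} \<and> length s = N}"
    by (rule finite_lists_length_eq) auto
  ultimately show ?thesis by (rule finite_subset)
qed

lemma all_le_Suc: "(\<forall>j\<le>Suc N. Q j) \<longleftrightarrow> Q 0 \<and> (\<forall>j\<le>N. Q (Suc j))"
  by (metis Suc_le_mono le0 not0_implies_Suc)

lemma bp_0: "bp K 0 x y = (if 0 \<le> x \<and> x \<le> K \<and> x = y then {[]} else {})"
  unfolding bp_def by auto

lemma bp_Suc: "bp K (Suc N) x y = (if 0 \<le> x \<and> x \<le> K then
   (Cons 1 ` bp K N (x+1) y) \<union> (Cons (-1) ` bp K N (x-1) y) else {})"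
proof (cases "0 \<le> x \<and> x \<le> K")
  case True
  have "bp K (Suc N) x y = (Cons 1 ` bp K N (x+1) y) \<union> (Cons (-1) ` bp K N (x-1) y)"
  proof (rule Set.set_eqI)
    fix s
    show "s \<in> bp K (Suc N) x y \<longleftrightarrow> s \<in> (Cons 1 ` bp K N (x+1) y) \<union> (Cons (-1) ` bp K N (x-1) y)"
    proof (cases s)
      case Nil
      then show ?thesis unfolding bp_def by auto
    next
      case (Cons t s')
      show ?thesis unfolding Cons bp_def all_le_Suc using True
        by (auto simp: algebra_simps)
    qed
  qed
  then show ?thesis using True by simp
next
  case False
  then show ?thesis unfolding bp_def by (auto dest: spec[of _ 0])
qed

lemma card_bp: "card (bp K N x y) = w K N x y"
proof (induction N arbitrary: x)
  case 0
  then show ?case by (simp add: bp_0)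
next
  case (Suc N)
  show ?case
  proof (cases "0 \<le> x \<and> x \<le> K")
    case True
    have "card (Cons 1 ` bp K N (x+1) y \<union> Cons (-1) ` bp K N (x-1) y)
      = card (Cons 1 ` bp K N (x+1) y) + card (Cons (-1) ` bp K N (x-1) y)"
      by (rule card_Un_disjoint) (auto simp: bp_finite)
    also have "\<dots> = card (bp K N (x+1) y) + card (bp K N (x-1) y)"
      by (simp add: card_image)
    finally have "card (Cons 1 ` bp K N (x+1) y \<union> Cons (-1) ` bp K N (x-1) y) = w K N (x+1) y + w K N (x-1) y"
      using Suc by simp
    moreover have "bp K (Suc N) x y = Cons 1 ` bp K N (x+1) y \<union> Cons (-1) ` bp K N (x-1) y"
      using True by (simp add: bp_Suc)
    ultimately show ?thesis using True by simp
  next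
    case False
    then have "bp K (Suc N) x y = {}" by (auto simp: bp_Suc)
    with False show ?thesis by auto
  qed
qed

lemma C_nat_w: "C_nat K N = w (int K) N 0 0"
proof -
  have "bounded_paths K N = bp (int K) N 0 0" unfolding bounded_paths_def bp_def by auto
  then show ?thesis unfolding C_nat_def by (simp add: card_bp)
qed

lemma w_out: "\<not> (0 \<le> x \<and> x \<le> K) \<Longrightarrow> w K N x y = 0"
  by (cases N) auto

lemma w_outy: "\<not> (0 \<le> y \<and> y \<le> K) \<Longrightarrow> w K N x y = 0"
  by (induction N arbitrary: x) auto

lemma w_last: "w K (Suc N) x y = (if 0 \<le> y \<and> y \<le> K then w K N x (y+1) + w K N x (y-1) else 0)"
proof (induction N arbitrary: x)
  case 0
  then show ?case by auto
next
  case (Suc N)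
  show ?case
  proof (cases "0 \<le> y \<and> y \<le> K")
    case True
    then show ?thesis using Suc[of "x+1"] Suc[of "x-1"] by (auto simp: w_out)
  next
    case False
    have "w K (Suc (Suc N)) x y = 0" by (rule w_outy[OF False])
    with False show ?thesis by (auto simp del: w.simps)
  qed
qed

lemma w_refl: "w K N x y = w K N (K-x) (K-y)"
proof (induction N arbitrary: x)
  case 0
  then show ?case by auto
next
  case (Suc N)
  have a: "K - (x+1) = K - x - 1" "K - (x - 1) = K - x + 1" by auto
  show ?case using Suc[of "x+1"] Suc[of "x-1"] unfolding a by auto
qed

lemma w_par: "odd (int N + x + y) \<Longrightarrow> w K N x y = 0"
proof (induction N arbitrary: x)
  case 0
  then show ?case by auto
next
  case (Suc N)
  have "odd (int N + (x+1) + y)" "odd (int N + (x-1) + y)" using Suc.prems by auto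
  then show ?case using Suc.IH by auto
qed

lemma w_far: "int N < \<bar>x - y\<bar> \<Longrightarrow> w K N x y = 0"
proof (induction N arbitrary: x)
  case 0
  then show ?case by auto
next
  case (Suc N)
  have "int N < \<bar>(x+1) - y\<bar>" "int N < \<bar>(x-1) - y\<bar>" using Suc.prems by auto
  then show ?case using Suc.IH by auto
qed

lemma w_down: "0 \<le> x - int N \<Longrightarrow> x \<le> K \<Longrightarrow> w K N x (x - int N) = 1"
proof (induction N arbitrary: x)
  case 0
  then show ?case by auto
next
  case (Suc N)
  have "w K N (x+1) (x - int (Suc N)) = 0" by (rule w_far) auto
  moreover have "w K N (x-1) (x - 1 - int N) = 1" using Suc by auto
  ultimately show ?case using Suc.prems by (auto simp: algebra_simps)
qed

lemma w_up: "0 \<le> x \<Longrightarrow> x + int N \<le> K \<Longrightarrow> w K N x (x + int N) = 1"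
proof (induction N arbitrary: x)
  case 0
  then show ?case by auto
next
  case (Suc N)
  have "w K N (x-1) (x + int (Suc N)) = 0" by (rule w_far) auto
  moreover have "w K N (x+1) (x + 1 + int N) = 1" using Suc by auto
  ultimately show ?case using Suc.prems by (auto simp: algebra_simps)
qed


lemma sum_rev_atMost: "(\<Sum>i\<le>n. f (n - i)) = (\<Sum>i\<le>(n::nat). f i)"
  using sum.atLeastAtMost_rev[of f 0 n] by (simp add: atLeast0AtMost)

lemma rec_unique0:
  fixes \<delta> :: "int \<Rightarrow> real" and a b :: "nat \<Rightarrow> real"
  assumes rec: "\<And>z. (\<Sum>q\<le>dB. b q * (\<Sum>p\<le>dA. a p * \<delta> (z + int p + int q))) = 0"
    and a0: "a 0 \<noteq> 0" and b0: "b 0 \<noteq> 0" and pos: "\<And>z. 0 \<le> z \<Longrightarrow> \<delta> z = 0"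
  shows "\<delta> z = 0"
proof -
  have "\<forall>z. - int t \<le> z \<longrightarrow> \<delta> z = 0" for t
  proof (induction t)
    case 0
    then show ?case using pos by auto
  next
    case (Suc t)
    show ?case
    proof (intro allI impI)
      fix z assume z: "- int (Suc t) \<le> z"
      show "\<delta> z = 0"
      proof (cases "- int t \<le> z")
        case True
        then show ?thesis using Suc by auto
      next
        case False
        have inner0: "(\<Sum>p\<le>dA. a p * \<delta> (z + int p + int q)) = 0" if "q \<noteq> 0" for q
          by (rule sum.neutral) (use Suc False that z in auto)
        have inner: "(\<Sum>p\<le>dA. a p * \<delta> (z + int p + int 0)) = a 0 * \<delta> z"
        proof -
          have "(\<Sum>p\<le>dA. a p * \<delta> (z + int p + int 0)) = a 0 * \<delta> (z + int 0 + int 0)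
              + (\<Sum>p\<in>{..dA} - {0}. a p * \<delta> (z + int p + int 0))"
            by (rule sum.remove) auto
          moreover have "(\<Sum>p\<in>{..dA} - {0}. a p * \<delta> (z + int p + int 0)) = 0"
            by (rule sum.neutral) (use Suc False z in auto)
          ultimately show ?thesis by simp
        qed
        have "0 = (\<Sum>q\<le>dB. b q * (\<Sum>p\<le>dA. a p * \<delta> (z + int p + int q)))" using rec by simp
        also have "\<dots> = b 0 * (\<Sum>p\<le>dA. a p * \<delta> (z + int p + int 0))
              + (\<Sum>q\<in>{..dB} - {0}. b q * (\<Sum>p\<le>dA. a p * \<delta> (z + int p + int q)))"
          by (rule sum.remove) auto
        also have "(\<Sum>q\<in>{..dB} - {0}. b q * (\<Sum>p\<le>dA. a p * \<delta> (z + int p + int q))) = 0"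
          by (rule sum.neutral) (auto simp: inner0)
        finally have "0 = b 0 * (\<Sum>p\<le>dA. a p * \<delta> (z + int p + int 0)) + 0" .
        then have "b 0 * (a 0 * \<delta> z) = 0" using inner by simp
        then show ?thesis using a0 b0 by simp
      qed
    qed
  qed
  then show ?thesis by (metis abs_ge_minus_self abs_of_nonneg int_nat_eq nat_0_le abs_ge_self le_cases neg_le_iff_le minus_minus)
qed

lemma rec_unique:
  fixes f g :: "int \<Rightarrow> real" and a b :: "nat \<Rightarrow> real"
  assumes fa: "\<And>z. (\<Sum>p\<le>dA. a p * f (z + int p)) = 0"
    and gb: "\<And>z. (\<Sum>q\<le>dB. b q * g (z + int q)) = 0"
    and a0: "a 0 \<noteq> 0" and b0: "b 0 \<noteq> 0" and pos: "\<And>z. 0 \<le> z \<Longrightarrow> f z = g z"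
  shows "f z = g z"
proof -
  let ?d = "\<lambda>z. f z - g z"
  have "?d z = 0"
  proof (rule rec_unique0[where a=a and b=b and dA=dA and dB=dB])
    fix z
    have 1: "(\<Sum>q\<le>dB. b q * (\<Sum>p\<le>dA. a p * f (z + int p + int q))) = 0"
    proof (rule sum.neutral, intro ballI)
      fix q
      have "(\<Sum>p\<le>dA. a p * f (z + int p + int q)) = (\<Sum>p\<le>dA. a p * f ((z + int q) + int p))"
        by (simp add: ac_simps)
      then show "b q * (\<Sum>p\<le>dA. a p * f (z + int p + int q)) = 0" using fa by simp
    qed
    have 2: "(\<Sum>q\<le>dB. b q * (\<Sum>p\<le>dA. a p * g (z + int p + int q))) = 0"
    proof -
      have "(\<Sum>q\<le>dB. b q * (\<Sum>p\<le>dA. a p * g (z + int p + int q)))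
          = (\<Sum>p\<le>dA. a p * (\<Sum>q\<le>dB. b q * g ((z + int p) + int q)))"
        by (simp add: sum_distrib_left sum.swap[of _ "{..dB}"] ac_simps)
      also have "\<dots> = 0" using gb by simp
      finally show ?thesis .
    qed
    show "(\<Sum>q\<le>dB. b q * (\<Sum>p\<le>dA. a p * ?d (z + int p + int q))) = 0"
      using 1 2 by (simp add: right_diff_distrib sum_subtractf)
  qed (use a0 b0 pos in auto)
  then show ?thesis by simp
qed


locale pathB = fixes h :: nat assumes h_pos: "0 < h"
begin

definition Kh :: int where "Kh = 2 * int h - 1"

definition B :: "real mat" where
  "B = mat h h (\<lambda>(i,j). if i = j then (if i = 0 then 1 else 2) else if i = Suc j \<or> j = Suc i then 1 else 0)"

lemma B_carrier[simp]: "B \<in> carrier_mat h h" unfolding B_def by simp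
lemma B_dims[simp]: "dim_row B = h" "dim_col B = h" unfolding B_def by simp_all

lemma B_idx: "i < h \<Longrightarrow> j < h \<Longrightarrow> B $$ (i,j) =
   (if i = j then (if i = 0 then 1 else 2) else if i = Suc j \<or> j = Suc i then 1 else 0)"
  unfolding B_def by simp

lemma sum_B: assumes j: "j < h"
  shows "(\<Sum>t\<in>{0..<h}. f t * B $$ (t,j)) = (if 0 < j then f (j-1) else 0)
     + (if j = 0 then 1 else 2) * f j + (if Suc j < h then f (Suc j) else 0)"
proof -
  have "(\<Sum>t\<in>{0..<h}. f t * B $$ (t,j)) = (\<Sum>t\<in>{0..<h}.
      (if t = j then (if j = 0 then 1 else 2) * f j else 0)
    + (if t = j - 1 then (if 0 < j then f t else 0) else 0)
    + (if t = Suc j then f t else 0))"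
  proof (rule sum.cong[OF refl])
    fix t assume "t \<in> {0..<h}"
    then have t: "t < h" by simp
    consider "t = j" | "t = Suc j" | "Suc t = j" | "t \<noteq> j" "t \<noteq> Suc j" "Suc t \<noteq> j" by blast
    then show "f t * B $$ (t,j) = (if t = j then (if j = 0 then 1 else 2) * f j else 0)
    + (if t = j - 1 then (if 0 < j then f t else 0) else 0)
    + (if t = Suc j then f t else 0)"
    proof cases
      case 1
      have "j \<noteq> j - 1 \<or> j = 0" by arith
      then show ?thesis using 1 t j by (auto simp add: B_idx)
    next
      case 2
      then show ?thesis using t j by (simp add: B_idx)
    next
      case 3
      then have "t = j - 1" "0 < j" "t \<noteq> j" "t \<noteq> Suc j" by auto
      then show ?thesis using t j by (simp add: B_idx)
    next
      case 4
      then have "t \<noteq> j - 1 \<or> j = 0" by arith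
      then show ?thesis using 4 t j by (auto simp add: B_idx)
    qed
  qed
  also have "\<dots> = (if 0 < j then f (j-1) else 0)
     + (if j = 0 then 1 else 2) * f j + (if Suc j < h then f (Suc j) else 0)"
    using j by (simp add: sum.distrib)
  finally show ?thesis .
qed

lemma w2: assumes j: "j < h"
  shows "real (w Kh (Suc (Suc M)) x (2 * int j)) =
     (if 0 < j then real (w Kh M x (2 * int (j - 1))) else 0)
     + (if j = 0 then 1 else 2) * real (w Kh M x (2 * int j))
     + (if Suc j < h then real (w Kh M x (2 * int (Suc j))) else 0)"
proof -
  have r: "0 \<le> 2 * int j \<and> 2 * int j \<le> Kh" "2 * int j + 1 \<le> Kh" using j by (auto simp: Kh_def)
  have a: "w Kh (Suc (Suc M)) x (2 * int j) = w Kh (Suc M) x (2 * int j + 1) + w Kh (Suc M) x (2 * int j - 1)"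
    using r by (simp only: w_last) simp
  have b: "w Kh (Suc M) x (2 * int j + 1) = w Kh M x (2 * int j + 2) + w Kh M x (2 * int j)"
    using r by (simp only: w_last) (simp add: algebra_simps)
  have c: "w Kh (Suc M) x (2 * int j - 1) = (if 0 < j then w Kh M x (2 * int j) + w Kh M x (2 * int j - 2) else 0)"
  proof (cases "0 < j")
    case True
    then have "0 \<le> 2 * int j - 1 \<and> 2 * int j - 1 \<le> Kh" using r by auto
    then show ?thesis using True by (simp only: w_last) (simp add: algebra_simps)
  next
    case False
    then show ?thesis by (simp add: w_outy)
  qed
  have d: "w Kh M x (2 * int j + 2) = (if Suc j < h then w Kh M x (2 * int (Suc j)) else 0)"
  proof (cases "Suc j < h")
    case False
    then have "\<not> (0 \<le> 2 * int j + 2 \<and> 2 * int j + 2 \<le> Kh)" by (auto simp: Kh_def)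
    then show ?thesis using False by (simp add: w_outy)
  qed (simp add: algebra_simps)
  have e: "0 < j \<Longrightarrow> 2 * int j - 2 = 2 * int (j - 1)" by auto
  show ?thesis
  proof (cases "j = 0")
    case True
    then show ?thesis unfolding a b c d by (simp add: Kh_def)
  next
    case False
    then show ?thesis unfolding a b c d e[OF _] by simp
  qed
qed

lemma Bpow: "i < h \<Longrightarrow> j < h \<Longrightarrow> (B ^\<^sub>m N) $$ (i,j) = real (w Kh (2*N) (2*int i) (2*int j))"
proof (induction N arbitrary: j)
  case 0
  then show ?case by (auto simp: Kh_def)
next
  case (Suc N)
  have "(B ^\<^sub>m Suc N) $$ (i,j) = (\<Sum>t\<in>{0..<h}. (B ^\<^sub>m N) $$ (i,t) * B $$ (t,j))"
    using Suc.prems by (simp add: scalar_prod_def del: w.simps)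
  also have "\<dots> = (\<Sum>t\<in>{0..<h}. real (w Kh (2*N) (2*int i) (2*int t)) * B $$ (t,j))"
    by (rule sum.cong) (use Suc in auto)
  also have "\<dots> = real (w Kh (2 * Suc N) (2*int i) (2*int j))"
  proof -
    have e: "2 * Suc N = Suc (Suc (2*N))" by simp
    show ?thesis unfolding sum_B[OF Suc.prems(2)] e w2[OF Suc.prems(2), of "2*N" "2*int i"]
      by (simp del: w.simps)
  qed
  finally show ?case .
qed

end


lemma inv_ex: assumes A: "(A :: real mat) \<in> carrier_mat n n" and d: "det A \<noteq> 0"
  shows "\<exists>X. X \<in> carrier_mat n n \<and> X * A = 1\<^sub>m n \<and> A * X = 1\<^sub>m n"
  using det_non_zero_imp_unit[OF A d, of undefined] unfolding Units_def ring_mat_def by auto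

lemma pow_comm: "A \<in> carrier_mat n n \<Longrightarrow> A ^\<^sub>m k * A = A * A ^\<^sub>m k"
proof (induction k)
  case 0 then show ?case by simp
next
  case (Suc k)
  have "A ^\<^sub>m Suc k * A = (A ^\<^sub>m k * A) * A" by simp
  also have "\<dots> = (A * A ^\<^sub>m k) * A" using Suc by simp
  also have "\<dots> = A * (A ^\<^sub>m k * A)" by (rule assoc_mult_mat) (use Suc.prems in auto)
  finally show ?case by simp
qed

lemma pow_add_mat: "A \<in> carrier_mat n n \<Longrightarrow> A ^\<^sub>m (k + l) = A ^\<^sub>m k * A ^\<^sub>m l"
proof (induction l)
  case 0 then show ?case by simp
next
  case (Suc l)
  have "A ^\<^sub>m (k + Suc l) = (A ^\<^sub>m k * A ^\<^sub>m l) * A" using Suc by simp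
  also have "\<dots> = A ^\<^sub>m k * (A ^\<^sub>m l * A)" by (rule assoc_mult_mat) (use Suc.prems in auto)
  finally show ?case by simp
qed

lemma det_pow_mat: "A \<in> carrier_mat n n \<Longrightarrow> det (A ^\<^sub>m k) = det A ^ k"
  by (induction k) (auto simp: det_mult[of _ n])

context pathB begin

definition D :: "real mat" where
  "D = mat h h (\<lambda>(i,j). if j = i \<or> j = Suc i then 1 else 0)"

lemma D_carrier[simp]: "D \<in> carrier_mat h h" unfolding D_def by simp
lemma D_dims[simp]: "dim_row D = h" "dim_col D = h" unfolding D_def by simp_all

lemma sum_D: assumes j: "j < h"
  shows "(\<Sum>l\<in>{0..<h}. g l * D $$ (l,j)) = g j + (if 0 < j then g (j-1) else 0)"
proof -
  have "(\<Sum>l\<in>{0..<h}. g l * D $$ (l,j)) = (\<Sum>l\<in>{0..<h}. (if l = j then g j else 0)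
      + (if l = j - 1 then (if 0 < j then g l else 0) else 0))"
  proof (rule sum.cong[OF refl])
    fix l assume "l \<in> {0..<h}"
    then have l: "l < h" by simp
    consider "l = j" | "Suc l = j" | "l \<noteq> j" "Suc l \<noteq> j" by blast
    then show "g l * D $$ (l,j) = (if l = j then g j else 0)
      + (if l = j - 1 then (if 0 < j then g l else 0) else 0)"
    proof cases
      case 1 then show ?thesis using l j by (cases j) (auto simp add: D_def)
    next
      case 2 then show ?thesis using l j by (auto simp add: D_def)
    next
      case 3 then show ?thesis using l j by (auto simp add: D_def)
    qed
  qed
  also have "\<dots> = g j + (if 0 < j then g (j-1) else 0)"
    using j by (simp add: sum.distrib)
  finally show ?thesis .
qed

lemma DtD: "transpose_mat D * D = B"
proof (rule eq_matI)
  fix i j assume "i < dim_row B" "j < dim_col B"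
  then have i: "i < h" and j: "j < h" by auto
  have "(transpose_mat D * D) $$ (i,j) = (\<Sum>l\<in>{0..<h}. D $$ (l,i) * D $$ (l,j))"
    using i j by (simp add: scalar_prod_def)
  also have "\<dots> = D $$ (j,i) + (if 0 < j then D $$ (j-1,i) else 0)"
    by (rule sum_D[OF j])
  also have "\<dots> = B $$ (i,j)"
    using i j by (auto simp: D_def B_idx)
  finally show "(transpose_mat D * D) $$ (i,j) = B $$ (i,j)" .
qed auto

lemma det_D: "det D = 1"
proof -
  have "upper_triangular D" unfolding upper_triangular_def D_def by auto
  then have "det D = prod_list (diag_mat D)" by (rule det_upper_triangular[OF _ D_carrier])
  also have "\<dots> = 1" unfolding prod_list_diag_prod by (simp add: D_def)
  finally show ?thesis .
qed

lemma det_B: "det B = 1"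
  unfolding DtD[symmetric] by (simp add: det_mult[of _ h] det_transpose[OF D_carrier] det_D)

definition Bi :: "real mat" where
  "Bi = (SOME X. X \<in> carrier_mat h h \<and> X * B = 1\<^sub>m h \<and> B * X = 1\<^sub>m h)"

lemma Bi: "Bi \<in> carrier_mat h h" "Bi * B = 1\<^sub>m h" "B * Bi = 1\<^sub>m h"
proof -
  have "\<exists>X. X \<in> carrier_mat h h \<and> X * B = 1\<^sub>m h \<and> B * X = 1\<^sub>m h"
    by (rule inv_ex) (auto simp: det_B)
  from someI_ex[OF this] show "Bi \<in> carrier_mat h h" "Bi * B = 1\<^sub>m h" "B * Bi = 1\<^sub>m h"
    unfolding Bi_def by auto
qed

lemma Bi_carrier[simp]: "Bi \<in> carrier_mat h h" by (rule Bi(1))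
lemma Bi_dims[simp]: "dim_row Bi = h" "dim_col Bi = h" using carrier_matD[OF Bi(1)] by auto

lemma det_Bi: "det Bi = 1"
proof -
  have "det (Bi * B) = 1" using Bi by simp
  then show ?thesis by (simp add: det_mult[of _ h] det_B)
qed

definition Bp :: "int \<Rightarrow> real mat" where
  "Bp z = (if 0 \<le> z then B ^\<^sub>m nat z else Bi ^\<^sub>m nat (- z))"

lemma Bp_carrier[simp]: "Bp z \<in> carrier_mat h h" unfolding Bp_def by auto
lemma Bp_dims[simp]: "dim_row (Bp z) = h" "dim_col (Bp z) = h"
  using carrier_matD[OF Bp_carrier[of z]] by auto

lemma Bp_nat: "Bp (int n) = B ^\<^sub>m n" unfolding Bp_def by simp
lemma Bp_0: "Bp 0 = 1\<^sub>m h" unfolding Bp_def by simp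
lemma Bp_neg: "Bp (- int n) = Bi ^\<^sub>m n"
proof (cases n)
  case 0 then show ?thesis by (simp add: Bp_0)
next
  case (Suc k)
  then have "\<not> 0 \<le> - int n" "nat (- (- int n)) = n" by auto
  then show ?thesis unfolding Bp_def by simp
qed

lemma Bp_succ: "Bp (z + 1) = Bp z * B"
proof (cases "0 \<le> z")
  case True
  then have "nat (z+1) = Suc (nat z)" by auto
  then show ?thesis using True unfolding Bp_def by simp
next
  case False
  define n where "n = nat (- z - 1)"
  have n: "z = - int (Suc n)" using False unfolding n_def by simp
  then have "z + 1 = - int n" by auto
  then have "Bp (z+1) = Bi ^\<^sub>m n" by (simp add: Bp_neg)
  also have "\<dots> = Bi ^\<^sub>m n * (Bi * B)" using Bi by simp
  also have "\<dots> = Bp z * B" unfolding n Bp_neg by (simp add: assoc_mult_mat[of _ h h _ h _ h])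
  finally show ?thesis .
qed

lemma Bp_pred: "Bp (z - 1) = Bp z * Bi"
proof (cases "0 < z")
  case True
  define n where "n = nat (z - 1)"
  have n: "z = int (Suc n)" using True unfolding n_def by simp
  then have "z - 1 = int n" by auto
  then have "Bp (z-1) = B ^\<^sub>m n" by (simp add: Bp_nat)
  also have "\<dots> = B ^\<^sub>m n * (B * Bi)" using Bi by simp
  also have "\<dots> = Bp z * Bi" unfolding n Bp_nat by (simp add: assoc_mult_mat[of _ h h _ h _ h])
  finally show ?thesis .
next
  case False
  then have "nat (- (z - 1)) = Suc (nat (- z))" by auto
  then show ?thesis using False unfolding Bp_def by simp
qed

lemma Bp_add_nat: "Bp (z + int n) = Bp z * Bp (int n)"
proof (induction n)
  case 0 then show ?case by (simp add: Bp_0)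
next
  case (Suc n)
  have e: "z + int (Suc n) = (z + int n) + 1" by simp
  have "Bp (z + int (Suc n)) = Bp (z + int n) * B" unfolding e by (rule Bp_succ)
  also have "\<dots> = Bp z * (Bp (int n) * B)" using Suc by (simp add: assoc_mult_mat[of _ h h _ h _ h])
  also have "Bp (int n) * B = Bp (int (Suc n))" using Bp_succ[of "int n"] by (simp add: add.commute)
  finally show ?case .
qed

lemma Bp_add_neg: "Bp (z - int n) = Bp z * Bp (- int n)"
proof (induction n)
  case 0 then show ?case by (simp add: Bp_0)
next
  case (Suc n)
  have e: "z - int (Suc n) = (z - int n) - 1" by simp
  have "Bp (z - int (Suc n)) = Bp (z - int n) * Bi" unfolding e by (rule Bp_pred)
  also have "\<dots> = Bp z * (Bp (- int n) * Bi)" using Suc by (simp add: assoc_mult_mat[of _ h h _ h _ h])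
  also have "Bp (- int n) * Bi = Bp (- int (Suc n))"
  proof -
    have e: "- int (Suc n) = - int n - 1" by simp
    show ?thesis unfolding e by (rule Bp_pred[symmetric])
  qed
  finally show ?case .
qed

lemma Bp_add: "Bp (z + v) = Bp z * Bp v"
proof (cases "0 \<le> v")
  case True
  then show ?thesis using Bp_add_nat[of z "nat v"] by simp
next
  case False
  then show ?thesis using Bp_add_neg[of z "nat (- v)"] by simp
qed

lemma det_Bp: "det (Bp z) = 1"
  unfolding Bp_def by (simp add: det_pow_mat[of _ h] det_B det_Bi)

end


context pathB begin

definition lc :: "(nat \<Rightarrow> real) \<Rightarrow> (nat \<Rightarrow> real mat) \<Rightarrow> nat set \<Rightarrow> real mat" where
  "lc c F S = mat h h (\<lambda>(l,s). \<Sum>p\<in>S. c p * F p $$ (l,s))"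

lemma lc_carrier[simp]: "lc c F S \<in> carrier_mat h h" unfolding lc_def by simp
lemma lc_dims[simp]: "dim_row (lc c F S) = h" "dim_col (lc c F S) = h" unfolding lc_def by simp_all

lemma lc_left: assumes M: "M \<in> carrier_mat h h" and F: "\<And>p. p \<in> S \<Longrightarrow> F p \<in> carrier_mat h h"
  shows "M * lc c F S = lc c (\<lambda>p. M * F p) S"
proof (rule eq_matI)
  fix l s assume ls: "l < dim_row (lc c (\<lambda>p. M * F p) S)" "s < dim_col (lc c (\<lambda>p. M * F p) S)"
  then have l: "l < h" and s: "s < h" by auto
  have "(M * lc c F S) $$ (l,s) = (\<Sum>q\<in>{0..<h}. M $$ (l,q) * (\<Sum>p\<in>S. c p * F p $$ (q,s)))"
    using l s M by (simp add: scalar_prod_def lc_def)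
  also have "\<dots> = (\<Sum>p\<in>S. c p * (\<Sum>q\<in>{0..<h}. M $$ (l,q) * F p $$ (q,s)))"
    by (simp add: sum_distrib_left sum.swap[of _ S] ac_simps)
  also have "\<dots> = lc c (\<lambda>p. M * F p) S $$ (l,s)"
  proof -
    have "lc c (\<lambda>p. M * F p) S $$ (l,s) = (\<Sum>p\<in>S. c p * (M * F p) $$ (l,s))"
      using l s by (simp add: lc_def)
    also have "\<dots> = (\<Sum>p\<in>S. c p * (\<Sum>q\<in>{0..<h}. M $$ (l,q) * F p $$ (q,s)))"
    proof (rule sum.cong[OF refl])
      fix p assume "p \<in> S"
      then have "F p \<in> carrier_mat h h" by (rule F)
      then show "c p * (M * F p) $$ (l,s) = c p * (\<Sum>q\<in>{0..<h}. M $$ (l,q) * F p $$ (q,s))"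
        using l s M by (simp add: scalar_prod_def)
    qed
    finally show ?thesis by simp
  qed
  finally show "(M * lc c F S) $$ (l,s) = lc c (\<lambda>p. M * F p) S $$ (l,s)" .
qed (use M in auto)

lemma lc_right: assumes M: "M \<in> carrier_mat h h" and F: "\<And>p. p \<in> S \<Longrightarrow> F p \<in> carrier_mat h h"
  shows "lc c F S * M = lc c (\<lambda>p. F p * M) S"
proof (rule eq_matI)
  fix l s assume ls: "l < dim_row (lc c (\<lambda>p. F p * M) S)" "s < dim_col (lc c (\<lambda>p. F p * M) S)"
  then have l: "l < h" and s: "s < h" by auto
  have "(lc c F S * M) $$ (l,s) = (\<Sum>q\<in>{0..<h}. (\<Sum>p\<in>S. c p * F p $$ (l,q)) * M $$ (q,s))"
    using l s M by (simp add: scalar_prod_def lc_def)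
  also have "\<dots> = (\<Sum>p\<in>S. c p * (\<Sum>q\<in>{0..<h}. F p $$ (l,q) * M $$ (q,s)))"
    by (simp add: sum_distrib_left sum_distrib_right sum.swap[of _ S] ac_simps)
  also have "\<dots> = lc c (\<lambda>p. F p * M) S $$ (l,s)"
  proof -
    have "lc c (\<lambda>p. F p * M) S $$ (l,s) = (\<Sum>p\<in>S. c p * (F p * M) $$ (l,s))"
      using l s by (simp add: lc_def)
    also have "\<dots> = (\<Sum>p\<in>S. c p * (\<Sum>q\<in>{0..<h}. F p $$ (l,q) * M $$ (q,s)))"
    proof (rule sum.cong[OF refl])
      fix p assume "p \<in> S"
      then have "F p \<in> carrier_mat h h" by (rule F)
      then show "c p * (F p * M) $$ (l,s) = c p * (\<Sum>q\<in>{0..<h}. F p $$ (l,q) * M $$ (q,s))"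
        using l s M by (simp add: scalar_prod_def)
    qed
    finally show ?thesis by simp
  qed
  finally show "(lc c F S * M) $$ (l,s) = lc c (\<lambda>p. F p * M) S $$ (l,s)" .
qed (use M in auto)

lemma lc_cong: "(\<And>p. p \<in> S \<Longrightarrow> F p = G p) \<Longrightarrow> lc c F S = lc c G S"
  unfolding lc_def by (auto intro!: sum.cong)

lemma Bpow_zero: "i < h \<Longrightarrow> j < i \<Longrightarrow> (B ^\<^sub>m j) $$ (i,0) = 0"
  using h_pos by (simp add: Bpow del: w.simps) (rule w_far, simp)

lemma Bpow_diag: "j < h \<Longrightarrow> (B ^\<^sub>m j) $$ (j,0) = 1"
proof -
  assume j: "j < h"
  have "w Kh (2*j) (2 * int j) (2 * int j - int (2*j)) = 1"
    by (rule w_down) (use j in \<open>auto simp: Kh_def\<close>)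
  then show ?thesis using j h_pos by (simp add: Bpow del: w.simps)
qed

definition U :: "real mat" where "U = mat h h (\<lambda>(i,j). (B ^\<^sub>m j) $$ (i,0))"

lemma U_carrier[simp]: "U \<in> carrier_mat h h" unfolding U_def by simp
lemma U_dims[simp]: "dim_row U = h" "dim_col U = h" unfolding U_def by simp_all

lemma det_U: "det U = 1"
proof -
  have "upper_triangular U" unfolding upper_triangular_def U_def by (auto simp: Bpow_zero)
  then have "det U = prod_list (diag_mat U)" by (rule det_upper_triangular[OF _ U_carrier])
  also have "\<dots> = 1" unfolding prod_list_diag_prod by (simp add: U_def Bpow_diag)
  finally show ?thesis .
qed

definition Ui :: "real mat" where
  "Ui = (SOME X. X \<in> carrier_mat h h \<and> X * U = 1\<^sub>m h \<and> U * X = 1\<^sub>m h)"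

lemma Ui: "Ui \<in> carrier_mat h h" "Ui * U = 1\<^sub>m h" "U * Ui = 1\<^sub>m h"
proof -
  have "\<exists>X. X \<in> carrier_mat h h \<and> X * U = 1\<^sub>m h \<and> U * X = 1\<^sub>m h"
    by (rule inv_ex) (auto simp: det_U)
  from someI_ex[OF this] show "Ui \<in> carrier_mat h h" "Ui * U = 1\<^sub>m h" "U * Ui = 1\<^sub>m h"
    unfolding Ui_def by auto
qed

definition Vm :: "real mat" where "Vm = mat h 1 (\<lambda>(l,_). (B ^\<^sub>m h) $$ (l,0))"
definition xc :: "nat \<Rightarrow> real" where "xc p = (Ui * Vm) $$ (p,0)"
definition cf :: "nat \<Rightarrow> real" where "cf p = (if p = h then 1 else - xc p)"

lemma U_xc: assumes l: "l < h" shows "(\<Sum>p\<in>{0..<h}. U $$ (l,p) * xc p) = (B ^\<^sub>m h) $$ (l,0)"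
proof -
  have Vm: "Vm \<in> carrier_mat h 1" unfolding Vm_def by simp
  have "U * (Ui * Vm) = (U * Ui) * Vm" using Ui(1) Vm by (simp add: assoc_mult_mat[of _ h h _ h _ 1])
  also have "\<dots> = Vm" using Ui(3) Vm by simp
  finally have e: "(U * (Ui * Vm)) $$ (l,0) = Vm $$ (l,0)" by simp
  have "(U * (Ui * Vm)) $$ (l,0) = (\<Sum>p\<in>{0..<h}. U $$ (l,p) * xc p)"
    using l Ui(1) Vm by (simp add: scalar_prod_def xc_def U_def)
  with e show ?thesis using l by (simp add: Vm_def)
qed

definition Ann :: "real mat" where "Ann = lc cf (\<lambda>p. B ^\<^sub>m p) {..h}"

lemma Ann_carrier[simp]: "Ann \<in> carrier_mat h h" unfolding Ann_def by simp
lemma Ann_dims[simp]: "dim_row Ann = h" "dim_col Ann = h" unfolding Ann_def by simp_all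

lemma Ann_col0: assumes l: "l < h" shows "Ann $$ (l,0) = 0"
proof -
  have "Ann $$ (l,0) = (\<Sum>p\<le>h. cf p * (B ^\<^sub>m p) $$ (l,0))" using l h_pos by (simp add: Ann_def lc_def)
  also have "\<dots> = (\<Sum>p<h. cf p * (B ^\<^sub>m p) $$ (l,0)) + (B ^\<^sub>m h) $$ (l,0)"
    by (simp add: lessThan_Suc_atMost[symmetric] cf_def)
  also have "(\<Sum>p<h. cf p * (B ^\<^sub>m p) $$ (l,0)) = - (\<Sum>p\<in>{0..<h}. U $$ (l,p) * xc p)"
    using l by (auto simp: cf_def U_def sum_negf[symmetric] atLeast0LessThan intro!: sum.cong)
  finally show ?thesis using U_xc[OF l] by simp
qed

lemma pow_comm2: "B ^\<^sub>m p * B ^\<^sub>m j = B ^\<^sub>m j * B ^\<^sub>m p"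
  using pow_add_mat[of B h p j] pow_add_mat[of B h j p] by (simp add: add.commute)

lemma AnnU: "Ann * U = 0\<^sub>m h h"
proof (rule eq_matI)
  fix l j assume "l < dim_row (0\<^sub>m h h :: real mat)" "j < dim_col (0\<^sub>m h h :: real mat)"
  then have l: "l < h" and j: "j < h" by auto
  have "(Ann * U) $$ (l,j) = (Ann * B ^\<^sub>m j) $$ (l,0)"
    using l j h_pos by (simp add: scalar_prod_def U_def Ann_def)
  also have "Ann * B ^\<^sub>m j = lc cf (\<lambda>p. B ^\<^sub>m p * B ^\<^sub>m j) {..h}"
    unfolding Ann_def by (rule lc_right) auto
  also have "\<dots> = lc cf (\<lambda>p. B ^\<^sub>m j * B ^\<^sub>m p) {..h}" by (simp add: pow_comm2)
  also have "\<dots> = B ^\<^sub>m j * Ann" unfolding Ann_def by (rule lc_left[symmetric]) auto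
  also have "(B ^\<^sub>m j * Ann) $$ (l,0) = (\<Sum>q\<in>{0..<h}. (B ^\<^sub>m j) $$ (l,q) * Ann $$ (q,0))"
    using l h_pos by (simp add: scalar_prod_def)
  also have "\<dots> = 0" by (rule sum.neutral) (auto simp: Ann_col0)
  finally show "(Ann * U) $$ (l,j) = 0\<^sub>m h h $$ (l,j)" using l j by simp
qed auto

lemma Ann_zero: "Ann = 0\<^sub>m h h"
proof -
  have A: "Ann \<in> carrier_mat h h" unfolding Ann_def by simp
  have "Ann = Ann * (U * Ui)" using Ui(3) A by simp
  also have "\<dots> = (Ann * U) * Ui" using A Ui(1) by (simp add: assoc_mult_mat[of _ h h _ h _ h])
  also have "\<dots> = 0\<^sub>m h h" using AnnU Ui(1) by simp
  finally show ?thesis .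
qed

lemma Bp_rec: assumes v: "v < h" "v' < h"
  shows "(\<Sum>p\<le>h. cf p * (Bp (z + int p)) $$ (v,v')) = 0"
proof -
  have "Bp z * Ann = lc cf (\<lambda>p. Bp z * B ^\<^sub>m p) {..h}" unfolding Ann_def by (rule lc_left) auto
  also have "\<dots> = lc cf (\<lambda>p. Bp (z + int p)) {..h}" by (simp add: Bp_add Bp_nat)
  finally have "lc cf (\<lambda>p. Bp (z + int p)) {..h} = 0\<^sub>m h h" using Ann_zero by simp
  then have "lc cf (\<lambda>p. Bp (z + int p)) {..h} $$ (v,v') = 0" using v by simp
  then show ?thesis using v by (simp add: lc_def)
qed

lemma cf_h: "cf h = 1" by (simp add: cf_def)

lemma cf0: "cf 0 \<noteq> 0"
proof
  assume c0: "cf 0 = 0"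
  obtain g where g: "h = Suc g" using h_pos by (cases h) auto
  let ?L = "lc (\<lambda>p. cf (Suc p)) (\<lambda>p. B ^\<^sub>m p) {..g}"
  have hs: "{..h} = {..Suc g}" using g by simp
  have "Ann = lc (\<lambda>p. cf (Suc p)) (\<lambda>p. B ^\<^sub>m Suc p) {..g}"
    unfolding Ann_def lc_def hs sum.atMost_Suc_shift using c0 by simp
  also have "\<dots> = lc (\<lambda>p. cf (Suc p)) (\<lambda>p. B * B ^\<^sub>m p) {..g}"
    by (rule lc_cong) (simp add: pow_comm[of B h])
  also have "\<dots> = B * ?L" by (rule lc_left[symmetric]) auto
  finally have "Bi * Ann = (Bi * B) * ?L" by (simp add: assoc_mult_mat[of _ h h _ h _ h])
  then have "?L = 0\<^sub>m h h" using Bi Ann_zero by simp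
  then have "?L $$ (g, 0) = 0" using g by simp
  moreover have "?L $$ (g, 0) = 1"
  proof -
    have gh: "g < h" using g by simp
    have "?L $$ (g,0) = (\<Sum>p\<le>g. cf (Suc p) * (B ^\<^sub>m p) $$ (g,0))" using gh h_pos by (simp add: lc_def)
    also have "\<dots> = (\<Sum>p<g. cf (Suc p) * (B ^\<^sub>m p) $$ (g,0)) + cf (Suc g) * (B ^\<^sub>m g) $$ (g,0)"
      by (simp add: lessThan_Suc_atMost[symmetric])
    also have "(\<Sum>p<g. cf (Suc p) * (B ^\<^sub>m p) $$ (g,0)) = 0"
      by (rule sum.neutral) (use gh in \<open>auto simp: Bpow_zero\<close>)
    also have "cf (Suc g) * (B ^\<^sub>m g) $$ (g,0) = 1" using gh Bpow_diag[OF gh] g[symmetric] cf_h by simp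
    finally show ?thesis by simp
  qed
  ultimately show False by simp
qed

definition f0 :: "int \<Rightarrow> real" where "f0 z = (Bp z) $$ (0,0)"
definition fT :: "int \<Rightarrow> real" where "fT z = (Bp z) $$ (h-1,h-1)"

lemma f0_rec: "(\<Sum>p\<le>h. cf p * f0 (z + int p)) = 0"
  unfolding f0_def using Bp_rec h_pos by simp
lemma fT_rec: "(\<Sum>p\<le>h. cf p * fT (z + int p)) = 0"
  unfolding fT_def using Bp_rec h_pos by simp

lemma f0_nat: "f0 (int n) = real (w Kh (2*n) 0 0)"
  unfolding f0_def Bp_nat using h_pos by (simp add: Bpow del: w.simps)

lemma fT_f0: "fT z = f0 (z + 1)"
proof (rule rec_unique[where a=cf and b=cf and dA=h and dB=h and f=fT and g="\<lambda>z. f0 (z+1)"])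
  show "(\<Sum>p\<le>h. cf p * fT (z + int p)) = 0" for z by (rule fT_rec)
  show "(\<Sum>p\<le>h. cf p * f0 (z + int p + 1)) = 0" for z
    using f0_rec[of "z+1"] by (simp add: ac_simps)
  show "cf 0 \<noteq> 0" by (rule cf0)
  show "fT z = f0 (z + 1)" if z: "0 \<le> z" for z
  proof -
    obtain n where n: "z = int n" using z by (metis nonneg_eq_int)
    have "fT z = real (w Kh (2*n) (2 * int (h-1)) (2 * int (h-1)))"
      unfolding fT_def n Bp_nat using h_pos by (simp add: Bpow del: w.simps)
    also have "2 * int (h-1) = Kh - 1" using h_pos by (simp add: Kh_def)
    also have "w Kh (2*n) (Kh - 1) (Kh - 1) = w Kh (2*n) 1 1"
      using w_refl[of Kh "2*n" 1 1] by simp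
    also have "w Kh (2*n) 1 1 = w Kh (Suc (Suc (2*n))) 0 0"
    proof -
      have k: "1 \<le> Kh" using h_pos by (auto simp: Kh_def)
      have "w Kh (Suc (Suc (2*n))) 0 0 = w Kh (Suc (2*n)) 1 0 + w Kh (Suc (2*n)) (-1) 0"
        using k by simp
      also have "w Kh (Suc (2*n)) (-1) 0 = 0" by (rule w_out) simp
      also have "w Kh (Suc (2*n)) 1 0 = w Kh (2*n) 1 1 + w Kh (2*n) 1 (-1)"
        using k by (simp only: w_last) simp
      also have "w Kh (2*n) 1 (-1) = 0" by (rule w_outy) simp
      finally show ?thesis by simp
    qed
    also have "real (w Kh (Suc (Suc (2*n))) 0 0) = f0 (z+1)"
    proof -
      have e: "2 * Suc n = Suc (Suc (2*n))" by simp
      show ?thesis using f0_nat[of "Suc n"] unfolding e n by (simp del: w.simps add: add.commute)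
    qed
    finally show ?thesis .
  qed
qed (rule cf0)

end


lemma sum_even: fixes g :: "nat \<Rightarrow> real" and n :: nat
  assumes "\<And>j. odd j \<Longrightarrow> g j = 0" shows "(\<Sum>j\<le>2*n. g j) = (\<Sum>p\<le>n. g (2*p))"
proof (induction n)
  case 0 then show ?case by simp
next
  case (Suc n)
  have e: "2 * Suc n = Suc (Suc (2*n))" by simp
  have "(\<Sum>j\<le>2*Suc n. g j) = (\<Sum>j\<le>2*n. g j) + g (Suc (2*n)) + g (2 * Suc n)"
    unfolding e by simp
  also have "g (Suc (2*n)) = 0" using assms by simp
  finally show ?case using Suc by simp
qed

context pathB begin

definition cfull :: "int \<Rightarrow> real" where "cfull N = (if even N then f0 (N div 2) else 0)"

lemma Kh_pos: "1 \<le> Kh" using h_pos by (simp add: Kh_def)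

lemma cfull_nat: "cfull (int n) = real (C_nat (nat Kh) n)"
proof -
  have K: "int (nat Kh) = Kh" using Kh_pos by simp
  show ?thesis
  proof (cases "even n")
    case True
    then obtain M where M: "n = 2*M" by blast
    then have "cfull (int n) = f0 (int M)" unfolding cfull_def by simp
    also have "\<dots> = real (w Kh n 0 0)" unfolding f0_nat M ..
    finally show ?thesis unfolding C_nat_w K .
  next
    case False
    then have "w Kh n 0 0 = 0" by (intro w_par) simp
    then show ?thesis using False unfolding cfull_def C_nat_w K by simp
  qed
qed

definition ec :: "nat \<Rightarrow> real" where "ec j = (if even j then cf (j div 2) else 0)"

lemma cfull_rec: "(\<Sum>j\<le>2*h. ec j * cfull (z + int j)) = 0"
proof -
  have "(\<Sum>j\<le>2*h. ec j * cfull (z + int j)) = (\<Sum>p\<le>h. ec (2*p) * cfull (z + int (2*p)))"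
    by (rule sum_even) (simp add: ec_def)
  also have "\<dots> = (\<Sum>p\<le>h. cf p * cfull (z + 2 * int p))" by (simp add: ec_def)
  also have "\<dots> = 0"
  proof (cases "even z")
    case True
    then obtain y where y: "z = 2*y" by blast
    have "(\<Sum>p\<le>h. cf p * cfull (z + 2 * int p)) = (\<Sum>p\<le>h. cf p * f0 (y + int p))"
      unfolding y cfull_def by (simp add: algebra_simps)
    then show ?thesis using f0_rec by simp
  next
    case False
    then show ?thesis unfolding cfull_def by simp
  qed
  finally show ?thesis .
qed

lemma ec0: "ec 0 \<noteq> 0" using cf0 by (simp add: ec_def)

definition qc :: "real poly" where "qc = (\<Sum>i\<le>2*h. monom (ec (2*h - i)) i)"

lemma coeff_qc: "coeff qc j = (if j \<le> 2*h then ec (2*h - j) else 0)"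
  unfolding qc_def coeff_sum by (simp add: sum.delta)

lemma degree_qc: "degree qc = 2*h"
proof (rule antisym)
  show "degree qc \<le> 2*h" by (rule degree_le) (simp add: coeff_qc)
  show "2*h \<le> degree qc" by (rule le_degree) (simp add: coeff_qc ec0)
qed

lemma C_eq: "C (nat Kh) = cfull"
  unfolding C_def
proof (rule the_equality)
  show "(\<forall>n. cfull (int n) = real (C_nat (nat Kh) n)) \<and>
    (\<exists>q. poly q 0 \<noteq> 0 \<and> (\<forall>N. (\<Sum>i\<le>degree q. coeff q i * cfull (N - int i)) = 0))"
  proof (intro conjI allI exI[of _ qc])
    show "cfull (int n) = real (C_nat (nat Kh) n)" for n by (rule cfull_nat)
    show "poly qc 0 \<noteq> 0" by (simp add: poly_0_coeff_0 coeff_qc ec_def cf_h)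
    fix N
    have "(\<Sum>i\<le>degree qc. coeff qc i * cfull (N - int i))
        = (\<Sum>i\<le>2*h. (\<lambda>j. ec j * cfull ((N - int (2*h)) + int j)) (2*h - i))"
      unfolding degree_qc by (rule sum.cong) (auto simp: coeff_qc of_nat_diff)
    also have "\<dots> = (\<Sum>j\<le>2*h. ec j * cfull ((N - int (2*h)) + int j))"
      by (rule sum_rev_atMost[of "\<lambda>j. ec j * cfull ((N - int (2*h)) + int j)" "2*h"])
    also have "\<dots> = 0" by (rule cfull_rec)
    finally show "(\<Sum>i\<le>degree qc. coeff qc i * cfull (N - int i)) = 0" .
  qed
next
  fix c :: "int \<Rightarrow> real"
  assume A: "(\<forall>n. c (int n) = real (C_nat (nat Kh) n)) \<and>
    (\<exists>q. poly q 0 \<noteq> 0 \<and> (\<forall>N. (\<Sum>i\<le>degree q. coeff q i * c (N - int i)) = 0))"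
  from A[THEN conjunct2] obtain q where q0: "poly q 0 \<noteq> 0" and qr: "\<And>N. (\<Sum>i\<le>degree q. coeff q i * c (N - int i)) = 0"
    by auto
  have qn: "q \<noteq> 0" using q0 by (metis poly_0)
  show "c = cfull"
  proof
    fix z
    show "c z = cfull z"
    proof (rule rec_unique[where f=c and g=cfull and a="\<lambda>p. coeff q (degree q - p)" and dA="degree q"
          and b=ec and dB="2*h"])
      show "(\<Sum>p\<le>degree q. coeff q (degree q - p) * c (z + int p)) = 0" for z
      proof -
        have "(\<Sum>p\<le>degree q. coeff q (degree q - p) * c (z + int p))
          = (\<Sum>p\<le>degree q. (\<lambda>i. coeff q i * c ((z + int (degree q)) - int i)) (degree q - p))"
        proof (rule sum.cong[OF refl])
          fix p assume "p \<in> {..degree q}"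
          then have p: "p \<le> degree q" by simp
          then have e1: "degree q - (degree q - p) = p" and e2: "int (degree q - p) = int (degree q) - int p"
            by auto
          show "coeff q (degree q - p) * c (z + int p) =
            (\<lambda>i. coeff q i * c ((z + int (degree q)) - int i)) (degree q - p)"
            unfolding e2 by simp
        qed
        also have "\<dots> = (\<Sum>i\<le>degree q. coeff q i * c ((z + int (degree q)) - int i))"
          by (rule sum_rev_atMost[of "\<lambda>i. coeff q i * c ((z + int (degree q)) - int i)" "degree q"])
        also have "\<dots> = 0" by (rule qr)
        finally show ?thesis .
      qed
      show "(\<Sum>q\<le>2*h. ec q * cfull (z + int q)) = 0" for z by (rule cfull_rec)
      show "coeff q (degree q - 0) \<noteq> 0" using qn by simp
      show "ec 0 \<noteq> 0" by (rule ec0)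
      show "c z = cfull z" if "0 \<le> z" for z
      proof -
        have "c z = real (C_nat (nat Kh) (nat z))" using A[THEN conjunct1, rule_format, of "nat z"] that by simp
        moreover have "cfull z = real (C_nat (nat Kh) (nat z))" using cfull_nat[of "nat z"] that by simp
        ultimately show ?thesis by simp
      qed
    qed
  qed
qed

end


lemma det_block_ur0: fixes M :: "real mat"
  assumes M: "M \<in> carrier_mat (k+m) (k+m)"
    and z: "\<And>i j. i < k \<Longrightarrow> k \<le> j \<Longrightarrow> j < k+m \<Longrightarrow> M $$ (i,j) = 0"
  shows "det M = det (mat k k (\<lambda>(i,j). M $$ (i,j))) * det (mat m m (\<lambda>(i,j). M $$ (k+i,k+j)))"
proof -
  have "M = four_block_mat (mat k k (\<lambda>(i,j). M $$ (i,j))) (0\<^sub>m k m)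
     (mat m k (\<lambda>(i,j). M $$ (k+i,j))) (mat m m (\<lambda>(i,j). M $$ (k+i,k+j)))"
    by (rule eq_matI) (use M z in auto)
  also have "det \<dots> = det (mat k k (\<lambda>(i,j). M $$ (i,j))) * det (mat m m (\<lambda>(i,j). M $$ (k+i,k+j)))"
    by (rule det_four_block_mat_upper_right_zero) auto
  finally show ?thesis .
qed

lemma det_block_ll0: fixes M :: "real mat"
  assumes M: "M \<in> carrier_mat (k+m) (k+m)"
    and z: "\<And>i j. k \<le> i \<Longrightarrow> i < k+m \<Longrightarrow> j < k \<Longrightarrow> M $$ (i,j) = 0"
  shows "det M = det (mat k k (\<lambda>(i,j). M $$ (i,j))) * det (mat m m (\<lambda>(i,j). M $$ (k+i,k+j)))"
proof -
  have "M = four_block_mat (mat k k (\<lambda>(i,j). M $$ (i,j))) (mat k m (\<lambda>(i,j). M $$ (i,k+j)))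
     (0\<^sub>m m k) (mat m m (\<lambda>(i,j). M $$ (k+i,k+j)))"
    by (rule eq_matI) (use M z in auto)
  also have "det \<dots> = det (mat k k (\<lambda>(i,j). M $$ (i,j))) * det (mat m m (\<lambda>(i,j). M $$ (k+i,k+j)))"
    by (rule det_four_block_mat_lower_left_zero) auto
  finally show ?thesis .
qed

context pathB begin

lemma Bp_w: "i < h \<Longrightarrow> j < h \<Longrightarrow> (Bp (int e)) $$ (i,j) = real (w Kh (2*e) (2 * int i) (2 * int j))"
  unfolding Bp_nat by (simp add: Bpow del: w.simps)

lemma Bp_far: assumes "i < h" "j < h" "int e < \<bar>int i - int j\<bar>" shows "(Bp (int e)) $$ (i,j) = 0"
proof -
  have "w Kh (2*e) (2 * int i) (2 * int j) = 0" by (rule w_far) (use assms in auto)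
  then show ?thesis using Bp_w[OF assms(1,2), of e] by simp
qed

lemma Bp_exact: assumes "i < h" "j < h" "int e = \<bar>int i - int j\<bar>" shows "(Bp (int e)) $$ (i,j) = 1"
proof (cases "j \<le> i")
  case True
  then have e: "2 * int j = 2 * int i - int (2*e)" using assms by simp
  have "w Kh (2*e) (2 * int i) (2 * int i - int (2*e)) = 1"
    by (rule w_down) (use assms True in \<open>auto simp: Kh_def\<close>)
  then show ?thesis using Bp_w[OF assms(1,2), of e] unfolding e by simp
next
  case False
  then have e: "2 * int j = 2 * int i + int (2*e)" using assms by simp
  have "w Kh (2*e) (2 * int i) (2 * int i + int (2*e)) = 1"
    by (rule w_up) (use assms False in \<open>auto simp: Kh_def\<close>)
  then show ?thesis using Bp_w[OF assms(1,2), of e] unfolding e by simp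
qed

definition Rw :: "(nat \<Rightarrow> int) \<Rightarrow> (nat \<Rightarrow> nat) \<Rightarrow> real mat" where
  "Rw e v = mat h h (\<lambda>(i,j). (Bp (e j)) $$ (v j, i))"
definition Cl :: "(nat \<Rightarrow> int) \<Rightarrow> (nat \<Rightarrow> nat) \<Rightarrow> real mat" where
  "Cl e v = mat h h (\<lambda>(i,j). (Bp (e j)) $$ (i, v j))"

lemma RwCl: assumes v: "\<And>j. j < h \<Longrightarrow> v j < h" and v': "\<And>j. j < h \<Longrightarrow> v' j < h"
  shows "transpose_mat (Rw e v) * Cl e' v' = mat h h (\<lambda>(j,j'). (Bp (e j + e' j')) $$ (v j, v' j'))"
proof (rule eq_matI)
  fix j j' assume "j < dim_row (mat h h (\<lambda>(j,j'). (Bp (e j + e' j')) $$ (v j, v' j')))"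
    "j' < dim_col (mat h h (\<lambda>(j,j'). (Bp (e j + e' j')) $$ (v j, v' j')))"
  then have j: "j < h" and j': "j' < h" by auto
  have "(transpose_mat (Rw e v) * Cl e' v') $$ (j,j') = (\<Sum>i\<in>{0..<h}. (Bp (e j)) $$ (v j, i) * (Bp (e' j')) $$ (i, v' j'))"
    using j j' by (simp add: Rw_def Cl_def scalar_prod_def)
  also have "\<dots> = (Bp (e j) * Bp (e' j')) $$ (v j, v' j')"
    using v[OF j] v'[OF j'] by (simp add: scalar_prod_def)
  also have "\<dots> = (Bp (e j + e' j')) $$ (v j, v' j')" by (simp add: Bp_add)
  finally show "(transpose_mat (Rw e v) * Cl e' v') $$ (j,j') = mat h h (\<lambda>(j,j'). (Bp (e j + e' j')) $$ (v j, v' j')) $$ (j,j')"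
    using j j' by simp
qed (auto simp: Rw_def Cl_def)

lemma Rw_carrier[simp]: "Rw e v \<in> carrier_mat h h" unfolding Rw_def by simp
lemma Cl_carrier[simp]: "Cl e v \<in> carrier_mat h h" unfolding Cl_def by simp

lemma Cl_shift: assumes v: "\<And>j. j < h \<Longrightarrow> v j < h"
  shows "Cl e v = Bp a * Cl (\<lambda>j. e j - a) v"
proof (rule eq_matI)
  fix i j assume "i < dim_row (Bp a * Cl (\<lambda>j. e j - a) v)" "j < dim_col (Bp a * Cl (\<lambda>j. e j - a) v)"
  then have i: "i < h" and j: "j < h" by (auto simp: Cl_def)
  have "(Bp a * Cl (\<lambda>j. e j - a) v) $$ (i,j) = (\<Sum>l\<in>{0..<h}. (Bp a) $$ (i,l) * (Bp (e j - a)) $$ (l, v j))"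
    using i j by (simp add: Cl_def scalar_prod_def)
  also have "\<dots> = (Bp a * Bp (e j - a)) $$ (i, v j)"
    using i v[OF j] by (simp add: scalar_prod_def)
  also have "\<dots> = (Bp (e j)) $$ (i, v j)" by (simp add: Bp_add[symmetric])
  finally show "Cl e v $$ (i,j) = (Bp a * Cl (\<lambda>j. e j - a) v) $$ (i,j)" using i j by (simp add: Cl_def)
qed (auto simp: Cl_def)

end

locale pathB2 = pathB + fixes k m n :: nat assumes hkm: "h = k + m"
begin

definition ee :: "nat \<Rightarrow> nat" where "ee r = m - 1 - r"
definition pe :: "nat \<Rightarrow> int" where "pe j = (if j < k then int j else int (ee (j - k)))"
definition pv :: "nat \<Rightarrow> nat" where "pv j = (if j < k then 0 else h - 1)"
definition aa :: int where "aa = int n + 2 * int m - 1"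
definition qe :: "nat \<Rightarrow> int" where "qe j = (if j < k then aa + int j else pe j)"

lemma pv_lt: "j < h \<Longrightarrow> pv j < h" using h_pos by (simp add: pv_def)

definition P where "P = Rw pe pv"
definition Q where "Q = Cl qe pv"
definition Q' where "Q' = Cl (\<lambda>j. qe j - aa) pv"

lemma hc: "k + m = h" by (rule hkm[symmetric])

lemma A1: "i < k \<Longrightarrow> j < i \<Longrightarrow> (Bp (int j)) $$ (0,i) = 0"
  by (rule Bp_far) (use hc in auto)
lemma A2: "i < k \<Longrightarrow> j < i \<Longrightarrow> (Bp (int j)) $$ (i,0) = 0"
  by (rule Bp_far) (use hc in auto)
lemma A3a: "j < k \<Longrightarrow> (Bp (int j)) $$ (0,j) = 1"
  by (rule Bp_exact) (use hc in auto)
lemma A3b: "j < k \<Longrightarrow> (Bp (int j)) $$ (j,0) = 1"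
  by (rule Bp_exact) (use hc in auto)
lemma A4a: "i < r \<Longrightarrow> r < m \<Longrightarrow> (Bp (int (ee r))) $$ (h - Suc 0,k+i) = 0"
  by (rule Bp_far) (use hc in \<open>auto simp: ee_def\<close>)
lemma A4b: "i < r \<Longrightarrow> r < m \<Longrightarrow> (Bp (int (ee r))) $$ (k+i,h - Suc 0) = 0"
  by (rule Bp_far) (use hc in \<open>auto simp: ee_def\<close>)
lemma A5a: "r < m \<Longrightarrow> (Bp (int (ee r))) $$ (h - Suc 0,k+r) = 1"
  by (rule Bp_exact) (use hc in \<open>auto simp: ee_def\<close>)
lemma A5b: "r < m \<Longrightarrow> (Bp (int (ee r))) $$ (k+r,h - Suc 0) = 1"
  by (rule Bp_exact) (use hc in \<open>auto simp: ee_def\<close>)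
lemma A6: "i < k \<Longrightarrow> r < m \<Longrightarrow> (Bp (int (ee r))) $$ (h - Suc 0,i) = 0"
  by (rule Bp_far) (use hc in \<open>auto simp: ee_def\<close>)
lemma A7: "j < k \<Longrightarrow> k \<le> i \<Longrightarrow> i < h \<Longrightarrow> (Bp (int j)) $$ (0,i) = 0"
  by (rule Bp_far) (use hc in auto)
lemma A9a: "e + 1 < h \<Longrightarrow> (Bp (int e)) $$ (0,h - Suc 0) = 0"
  by (rule Bp_far) (use hc in auto)
lemma A9b: "e + 1 < h \<Longrightarrow> (Bp (int e)) $$ (h - Suc 0,0) = 0"
  by (rule Bp_far) (use hc in auto)
lemmas A3 = A3a A3b
lemmas A4 = A4a A4b
lemmas A5 = A5a A5b
lemmas A9 = A9a A9b

definition P1 where "P1 = mat k k (\<lambda>(i,j). (Bp (int j)) $$ (0,i))"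
definition P1c where "P1c = mat k k (\<lambda>(i,j). (Bp (int j)) $$ (i,0))"
definition P2 where "P2 = mat m m (\<lambda>(i,r). (Bp (int (ee r))) $$ (h-1,k+i))"
definition P2c where "P2c = mat m m (\<lambda>(i,r). (Bp (int (ee r))) $$ (k+i,h-1))"

lemma P1_carrier[simp]: "P1 \<in> carrier_mat k k" unfolding P1_def by simp
lemma P1c_carrier[simp]: "P1c \<in> carrier_mat k k" unfolding P1c_def by simp
lemma P2_carrier[simp]: "P2 \<in> carrier_mat m m" unfolding P2_def by simp
lemma P2c_carrier[simp]: "P2c \<in> carrier_mat m m" unfolding P2c_def by simp

lemma det_P1: "det P1 = 1"
proof -
  have "upper_triangular P1" unfolding upper_triangular_def P1_def by (auto simp: A1)
  then have "det P1 = prod_list (diag_mat P1)" by (rule det_upper_triangular) (auto simp: P1_def P1c_def)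
  also have "\<dots> = 1" unfolding prod_list_diag_prod by (auto simp: P1_def A3 intro!: prod.neutral)
  finally show ?thesis .
qed

lemma det_P1c: "det P1c = 1"
proof -
  have "upper_triangular P1c" unfolding upper_triangular_def P1c_def by (auto simp: A2)
  then have "det P1c = prod_list (diag_mat P1c)" by (rule det_upper_triangular) (auto simp: P1_def P1c_def)
  also have "\<dots> = 1" unfolding prod_list_diag_prod by (auto simp: P1c_def A3 intro!: prod.neutral)
  finally show ?thesis .
qed

lemma det_P2: "det P2 = 1"
proof -
  have "det P2 = prod_list (diag_mat P2)"
  proof (rule det_lower_triangular[of m])
    fix i j assume "i < j" "j < m" then show "P2 $$ (i,j) = 0" by (simp add: P2_def A4a)
  qed simp
  also have "\<dots> = 1" unfolding prod_list_diag_prod by (auto simp: P2_def A5 intro!: prod.neutral)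
  finally show ?thesis .
qed

lemma det_P2c: "det P2c = 1"
proof -
  have "det P2c = prod_list (diag_mat P2c)"
  proof (rule det_lower_triangular[of m])
    fix i j assume "i < j" "j < m" then show "P2c $$ (i,j) = 0" by (simp add: P2c_def A4b)
  qed simp
  also have "\<dots> = 1" unfolding prod_list_diag_prod by (auto simp: P2c_def A5 intro!: prod.neutral)
  finally show ?thesis .
qed

lemma P_carrier: "P \<in> carrier_mat (k+m) (k+m)" unfolding hc by (simp add: P_def)

lemma det_P: "det P = 1"
proof -
  have "det P = det (mat k k (\<lambda>(i,j). P $$ (i,j))) * det (mat m m (\<lambda>(i,j). P $$ (k+i,k+j)))"
  proof (rule det_block_ur0[OF P_carrier])
    fix i j assume ij: "i < k" "k \<le> j" "j < k+m"
    then have "j < h" "j - k < m" "i < h" using hc by auto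
    then show "P $$ (i,j) = 0" using ij by (simp add: P_def Rw_def pe_def pv_def A6)
  qed
  also have "mat k k (\<lambda>(i,j). P $$ (i,j)) = P1"
  proof (rule eq_matI)
    fix i j assume "i < dim_row P1" "j < dim_col P1"
    then have "i < k" "j < k" "i < h" "j < h" using hc by (auto simp: P1_def)
    then show "mat k k (\<lambda>(i,j). P $$ (i,j)) $$ (i,j) = P1 $$ (i,j)"
      by (simp add: P_def Rw_def pe_def pv_def P1_def)
  qed (auto simp: P1_def)
  also have "mat m m (\<lambda>(i,j). P $$ (k+i,k+j)) = P2"
  proof (rule eq_matI)
    fix i j assume "i < dim_row P2" "j < dim_col P2"
    then have "i < m" "j < m" "k + i < h" "k + j < h" using hc by (auto simp: P2_def)
    then show "mat m m (\<lambda>(i,j). P $$ (k+i,k+j)) $$ (i,j) = P2 $$ (i,j)"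
      by (simp add: P_def Rw_def pe_def pv_def P2_def)
  qed (auto simp: P2_def)
  finally show ?thesis using det_P1 det_P2 by simp
qed

lemma H0_eq: "mat k k (\<lambda>(j,j'). f0 (int j + int j')) = transpose_mat P1 * P1c"
proof (rule eq_matI)
  fix j j' assume "j < dim_row (transpose_mat P1 * P1c)" "j' < dim_col (transpose_mat P1 * P1c)"
  then have j: "j < k" and j': "j' < k" by (auto simp: P1_def P1c_def)
  have kh: "k \<le> h" using hc by simp
  have "f0 (int j + int j') = (Bp (int j) * Bp (int j')) $$ (0,0)" by (simp add: f0_def Bp_add)
  also have "\<dots> = (\<Sum>i\<in>{0..<h}. (Bp (int j)) $$ (0,i) * (Bp (int j')) $$ (i,0))"
    using h_pos by (simp add: scalar_prod_def)
  also have "\<dots> = (\<Sum>i\<in>{0..<k}. (Bp (int j)) $$ (0,i) * (Bp (int j')) $$ (i,0))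
      + (\<Sum>i\<in>{k..<h}. (Bp (int j)) $$ (0,i) * (Bp (int j')) $$ (i,0))"
    using kh by (simp add: sum.atLeastLessThan_concat)
  also have "(\<Sum>i\<in>{k..<h}. (Bp (int j)) $$ (0,i) * (Bp (int j')) $$ (i,0)) = 0"
    by (rule sum.neutral) (use j in \<open>auto simp: A7\<close>)
  also have "(\<Sum>i\<in>{0..<k}. (Bp (int j)) $$ (0,i) * (Bp (int j')) $$ (i,0)) = (transpose_mat P1 * P1c) $$ (j,j')"
    using j j' by (simp add: P1_def P1c_def scalar_prod_def)
  finally show "mat k k (\<lambda>(j,j'). f0 (int j + int j')) $$ (j,j') = (transpose_mat P1 * P1c) $$ (j,j')"
    using j j' by simp
qed (auto simp: P1_def P1c_def)

lemma det_H0: "det (mat k k (\<lambda>(j,j'). f0 (int j + int j'))) = 1"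
  unfolding H0_eq by (simp add: det_mult[of _ k] det_transpose[of _ k] det_P1 det_P1c)

lemma Z_eq: "mat m m (\<lambda>(r,r'). fT (int (ee r) + int (ee r'))) = transpose_mat P2 * P2c"
proof (rule eq_matI)
  fix r r' assume "r < dim_row (transpose_mat P2 * P2c)" "r' < dim_col (transpose_mat P2 * P2c)"
  then have r: "r < m" and r': "r' < m" by (auto simp: P2_def P2c_def)
  let ?f = "\<lambda>i. (Bp (int (ee r))) $$ (h-1,i) * (Bp (int (ee r'))) $$ (i,h-1)"
  have "fT (int (ee r) + int (ee r')) = (Bp (int (ee r)) * Bp (int (ee r'))) $$ (h-1,h-1)" by (simp add: fT_def Bp_add)
  also have "\<dots> = (\<Sum>i\<in>{0..<h}. ?f i)"
    using h_pos by (simp add: scalar_prod_def)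
  also have "{0..<h} = {0..<k+m}" using hc by simp
  also have "(\<Sum>i\<in>{0..<k+m}. ?f i) = (\<Sum>i\<in>{0..<k}. ?f i) + (\<Sum>i\<in>{k..<k+m}. ?f i)"
    by (simp add: sum.atLeastLessThan_concat)
  also have "(\<Sum>i\<in>{0..<k}. ?f i) = 0"
    by (rule sum.neutral) (use r in \<open>auto simp: A6\<close>)
  also have "(\<Sum>i\<in>{k..<k+m}. ?f i) = (\<Sum>i\<in>{0..<m}. ?f (k+i))"
    using sum.shift_bounds_nat_ivl[of ?f 0 k m] by (simp add: add.commute)
  also have "\<dots> = (transpose_mat P2 * P2c) $$ (r,r')"
    using r r' by (simp add: P2_def P2c_def scalar_prod_def)
  finally show "mat m m (\<lambda>(r,r'). fT (int (ee r) + int (ee r'))) $$ (r,r') = (transpose_mat P2 * P2c) $$ (r,r')"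
    using r r' by simp
qed (auto simp: P2_def P2c_def)

lemma det_Z: "det (mat m m (\<lambda>(r,r'). fT (int (ee r) + int (ee r')))) = 1"
  unfolding Z_eq by (simp add: det_mult[of _ m] det_transpose[of _ m] det_P2 det_P2c)

lemma det_Q: "det Q = det Q'"
proof -
  have "Q = Bp aa * Q'" unfolding Q_def Q'_def by (rule Cl_shift) (rule pv_lt)
  then show ?thesis by (simp add: det_mult[of _ h] det_Bp Q'_def)
qed

lemma N_eq: "transpose_mat P * Q = mat h h (\<lambda>(j,j'). (Bp (pe j + qe j')) $$ (pv j, pv j'))"
  unfolding P_def Q_def by (rule RwCl) (simp_all add: pv_lt)

lemma N'_eq: "transpose_mat P * Q' = mat h h (\<lambda>(j,j'). (Bp (pe j + (qe j' - aa))) $$ (pv j, pv j'))"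
  unfolding P_def Q'_def by (rule RwCl) (simp_all add: pv_lt)

lemma det_PQ: "det (transpose_mat P * Q) = det Q"
proof -
  have "P \<in> carrier_mat h h" "Q \<in> carrier_mat h h" by (simp_all add: P_def Q_def)
  then show ?thesis by (simp add: det_mult[of _ h] det_transpose[of _ h] det_P)
qed

lemma det_PQ': "det (transpose_mat P * Q') = det Q'"
proof -
  have "P \<in> carrier_mat h h" "Q' \<in> carrier_mat h h" by (simp_all add: P_def Q'_def)
  then show ?thesis by (simp add: det_mult[of _ h] det_transpose[of _ h] det_P)
qed

lemma detN: "det (transpose_mat P * Q) = det (mat k k (\<lambda>(i,j). f0 (aa + int i + int j)))
   * det (mat m m (\<lambda>(r,r'). fT (int (ee r) + int (ee r'))))"
proof -
  let ?N = "mat h h (\<lambda>(j,j'). (Bp (pe j + qe j')) $$ (pv j, pv j'))"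
  have C: "?N \<in> carrier_mat (k+m) (k+m)" unfolding hc by simp
  have "det ?N = det (mat k k (\<lambda>(i,j). ?N $$ (i,j))) * det (mat m m (\<lambda>(i,j). ?N $$ (k+i,k+j)))"
  proof (rule det_block_ur0[OF C])
    fix i j assume ij: "i < k" "k \<le> j" "j < k+m"
    have e: "pe i + qe j = int (i + ee (j - k))" using ij by (simp add: pe_def qe_def)
    have lt: "i < h" "j < h" "i + ee (j - k) + 1 < h" using ij hc by (auto simp: ee_def)
    have z: "Bp (int (i + ee (j - k))) $$ (0, h - Suc 0) = 0" by (rule A9a) (use lt in simp)
    show "?N $$ (i,j) = 0" using ij lt z by (simp add: e pv_def)
  qed
  also have "mat k k (\<lambda>(i,j). ?N $$ (i,j)) = mat k k (\<lambda>(i,j). f0 (aa + int i + int j))"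
  proof (rule eq_matI)
    fix i j assume "i < dim_row (mat k k (\<lambda>(i,j). f0 (aa + int i + int j)))"
       "j < dim_col (mat k k (\<lambda>(i,j). f0 (aa + int i + int j)))"
    then have "i < k" "j < k" "i < h" "j < h" using hc by auto
    then show "mat k k (\<lambda>(i,j). ?N $$ (i,j)) $$ (i,j) = mat k k (\<lambda>(i,j). f0 (aa + int i + int j)) $$ (i,j)"
      by (simp add: pe_def qe_def pv_def f0_def ac_simps)
  qed auto
  also have "mat m m (\<lambda>(i,j). ?N $$ (k+i,k+j)) = mat m m (\<lambda>(r,r'). fT (int (ee r) + int (ee r')))"
  proof (rule eq_matI)
    fix i j assume "i < dim_row (mat m m (\<lambda>(r,r'). fT (int (ee r) + int (ee r'))))"
       "j < dim_col (mat m m (\<lambda>(r,r'). fT (int (ee r) + int (ee r'))))"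
    then have "i < m" "j < m" "k + i < h" "k + j < h" using hc by auto
    then show "mat m m (\<lambda>(i,j). ?N $$ (k+i,k+j)) $$ (i,j) = mat m m (\<lambda>(r,r'). fT (int (ee r) + int (ee r'))) $$ (i,j)"
      by (simp add: pe_def qe_def pv_def fT_def)
  qed auto
  finally show ?thesis unfolding N_eq .
qed

lemma detN': "det (transpose_mat P * Q') = det (mat k k (\<lambda>(j,j'). f0 (int j + int j')))
   * det (mat m m (\<lambda>(i,j). f0 (- int n - int i - int j)))"
proof -
  let ?N = "mat h h (\<lambda>(j,j'). (Bp (pe j + (qe j' - aa))) $$ (pv j, pv j'))"
  have C: "?N \<in> carrier_mat (k+m) (k+m)" unfolding hc by simp
  have "det ?N = det (mat k k (\<lambda>(i,j). ?N $$ (i,j))) * det (mat m m (\<lambda>(i,j). ?N $$ (k+i,k+j)))"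
  proof (rule det_block_ll0[OF C])
    fix i j assume ij: "k \<le> i" "i < k+m" "j < k"
    have e: "pe i + (qe j - aa) = int (ee (i - k) + j)" using ij by (simp add: pe_def qe_def)
    have lt: "i < h" "j < h" "ee (i - k) + j + 1 < h" using ij hc by (auto simp: ee_def)
    have z: "Bp (int (ee (i - k) + j)) $$ (h - Suc 0, 0) = 0" by (rule A9b) (use lt in simp)
    show "?N $$ (i,j) = 0" using ij lt z by (simp add: e pv_def)
  qed
  also have "mat k k (\<lambda>(i,j). ?N $$ (i,j)) = mat k k (\<lambda>(j,j'). f0 (int j + int j'))"
  proof (rule eq_matI)
    fix i j assume "i < dim_row (mat k k (\<lambda>(j,j'). f0 (int j + int j')))"
       "j < dim_col (mat k k (\<lambda>(j,j'). f0 (int j + int j')))"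
    then have "i < k" "j < k" "i < h" "j < h" using hc by auto
    then show "mat k k (\<lambda>(i,j). ?N $$ (i,j)) $$ (i,j) = mat k k (\<lambda>(j,j'). f0 (int j + int j')) $$ (i,j)"
      by (simp add: pe_def qe_def pv_def f0_def)
  qed auto
  also have "mat m m (\<lambda>(i,j). ?N $$ (k+i,k+j)) = mat m m (\<lambda>(i,j). f0 (- int n - int i - int j))"
  proof (rule eq_matI)
    fix i j assume "i < dim_row (mat m m (\<lambda>(i,j). f0 (- int n - int i - int j)))"
      "j < dim_col (mat m m (\<lambda>(i,j). f0 (- int n - int i - int j)))"
    then have i: "i < m" and j: "j < m" by auto
    then have "k + i < h" "k + j < h" using hc by auto
    then have "?N $$ (k+i,k+j) = fT (int (ee i) + (int (ee j) - aa))"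
      by (simp add: pe_def qe_def pv_def fT_def)
    also have "\<dots> = f0 (- int n - int i - int j)"
    proof -
      have e: "int (ee i) + (int (ee j) - aa) + 1 = - int n - int i - int j"
        using i j by (simp add: ee_def aa_def of_nat_diff)
      show ?thesis unfolding fT_f0 e ..
    qed
    finally show "mat m m (\<lambda>(i,j). ?N $$ (k+i,k+j)) $$ (i,j) = mat m m (\<lambda>(i,j). f0 (- int n - int i - int j)) $$ (i,j)"
      using i j by simp
  qed auto
  finally show ?thesis unfolding N'_eq .
qed

lemma main_id: "det (mat k k (\<lambda>(i,j). f0 (aa + int i + int j))) = det (mat m m (\<lambda>(i,j). f0 (- int n - int i - int j)))"
  using detN detN' det_PQ det_PQ' det_Q det_H0 det_Z by simp

end


theorem theorem15:
  fixes n k m :: nat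
  shows "det (mat k k (\<lambda>(i, j). C (2*k + 2*m - 1) (2*int n + 2*int i + 2*int j + 4*int m - 2)))
       = det (mat m m (\<lambda>(i, j). C (2*k + 2*m - 1) (- 2*int n - 2*int i - 2*int j)))"
proof (cases "k + m = 0")
  case True
  then have "k = 0" "m = 0" by auto
  then show ?thesis
    by (metis (no_types, lifting) eq_matI dim_col_mat(1) dim_row_mat(1) not_less_zero)
next
  case False
  interpret pathB2 "k+m" k m n by unfold_locales (use False in auto)
  have K: "2*k + 2*m - 1 = nat Kh" by (simp add: Kh_def)
  have c2: "cfull (2 * x) = f0 x" for x by (simp add: cfull_def)
  have L: "mat k k (\<lambda>(i, j). C (2*k + 2*m - 1) (2*int n + 2*int i + 2*int j + 4*int m - 2))
     = mat k k (\<lambda>(i,j). f0 (aa + int i + int j))"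
  proof (rule eq_matI)
    fix i j assume "i < dim_row (mat k k (\<lambda>(i,j). f0 (aa + int i + int j)))"
      "j < dim_col (mat k k (\<lambda>(i,j). f0 (aa + int i + int j)))"
    then have i: "i < k" and j: "j < k" by auto
    have e: "2*int n + 2*int i + 2*int j + 4*int m - 2 = 2 * (aa + int i + int j)"
      by (simp add: aa_def)
    show "mat k k (\<lambda>(i, j). C (2*k + 2*m - 1) (2*int n + 2*int i + 2*int j + 4*int m - 2)) $$ (i,j)
     = mat k k (\<lambda>(i,j). f0 (aa + int i + int j)) $$ (i,j)"
    proof -
      have "mat k k (\<lambda>(i, j). C (2*k + 2*m - 1) (2*int n + 2*int i + 2*int j + 4*int m - 2)) $$ (i,j)
         = C (2*k + 2*m - 1) (2*int n + 2*int i + 2*int j + 4*int m - 2)" using i j by simp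
      also have "\<dots> = cfull (2 * (aa + int i + int j))" unfolding K C_eq e ..
      also have "\<dots> = f0 (aa + int i + int j)" by (rule c2)
      finally show ?thesis using i j by simp
    qed
  qed auto
  have R: "mat m m (\<lambda>(i, j). C (2*k + 2*m - 1) (- 2*int n - 2*int i - 2*int j))
     = mat m m (\<lambda>(i,j). f0 (- int n - int i - int j))"
  proof (rule eq_matI)
    fix i j assume "i < dim_row (mat m m (\<lambda>(i,j). f0 (- int n - int i - int j)))"
      "j < dim_col (mat m m (\<lambda>(i,j). f0 (- int n - int i - int j)))"
    then have i: "i < m" and j: "j < m" by auto
    have e: "- 2*int n - 2*int i - 2*int j = 2 * (- int n - int i - int j)" by simp
    show "mat m m (\<lambda>(i, j). C (2*k + 2*m - 1) (- 2*int n - 2*int i - 2*int j)) $$ (i,j)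
     = mat m m (\<lambda>(i,j). f0 (- int n - int i - int j)) $$ (i,j)"
    proof -
      have "mat m m (\<lambda>(i, j). C (2*k + 2*m - 1) (- 2*int n - 2*int i - 2*int j)) $$ (i,j)
         = C (2*k + 2*m - 1) (- 2*int n - 2*int i - 2*int j)" using i j by simp
      also have "\<dots> = cfull (2 * (- int n - int i - int j))" unfolding K C_eq e ..
      also have "\<dots> = f0 (- int n - int i - int j)" by (rule c2)
      finally show ?thesis using i j by simp
    qed
  qed auto
  show ?thesis unfolding L R by (rule main_id)
qed


end
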